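(* For every compact ordered space $X$, the convex Vietoris hyperspace $\mathbb{V}^{\mathrm{c}}X$ (with its topology and the Egli–Milner order) is a compact ordered space.
   Context: A compact ordered space is a compact Hausdorff space equipped with a partial order that is a closed subset of $X\times X$ (product topology). For a subset $Y$ of a poset, $\uparrow Y$ and $\downarrow Y$ are its up-closure and down-closure; $Y$ is convex if $y_1\le x\le y_2$ with $y_1,y_2\in Y$ implies $x\in Y$; $\updownarrow Y=\uparrow Y\cap\downarrow Y$. For a compact ordered space $X$, $\mathbb{V}^{\mathrm{c}}X$ is the set of closed convex subsets of $X$ (including $\varnothing$), with the topology generated by the sets $\Diamond U=\{K\mid K\cap U\neq\varnothing\}$ and $\Box U=\{K\mid K\subseteq U\}$ for $U$ ranging over open upsets and open downsets of $X$, and ordered by the Egli–Milner order: $K\le_{\mathrm{EM}}L$ iff $\uparrow L\subseteq\uparrow K$ and $\downarrow K\subseteq\downarrow L$. *)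

theory Defs
  imports "HOL-Analysis.Analysis"
begin

text \<open>A partial order on the carrier of a topological space is given as a relation
  le; only its restriction to topspace X matters.\<close>

definition partial_order_on_set :: "'a set \<Rightarrow> ('a \<Rightarrow> 'a \<Rightarrow> bool) \<Rightarrow> bool" where
  "partial_order_on_set S le \<longleftrightarrow>
     (\<forall>x\<in>S. le x x) \<and>
     (\<forall>x\<in>S. \<forall>y\<in>S. le x y \<and> le y x \<longrightarrow> x = y) \<and>
     (\<forall>x\<in>S. \<forall>y\<in>S. \<forall>z\<in>S. le x y \<and> le y z \<longrightarrow> le x z)"

definition order_graph :: "'a topology \<Rightarrow> ('a \<Rightarrow> 'a \<Rightarrow> bool) \<Rightarrow> ('a \<times> 'a) set" where
  "order_graph X le = {(x, y). x \<in> topspace X \<and> y \<in> topspace X \<and> le x y}"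

definition compact_ordered_space :: "'a topology \<Rightarrow> ('a \<Rightarrow> 'a \<Rightarrow> bool) \<Rightarrow> bool" where
  "compact_ordered_space X le \<longleftrightarrow>
     compact_space X \<and> Hausdorff_space X \<and> partial_order_on_set (topspace X) le \<and>
     closedin (prod_topology X X) (order_graph X le)"

definition up_closure :: "'a topology \<Rightarrow> ('a \<Rightarrow> 'a \<Rightarrow> bool) \<Rightarrow> 'a set \<Rightarrow> 'a set" where
  "up_closure X le Y = {x \<in> topspace X. \<exists>y\<in>Y. le y x}"

definition down_closure :: "'a topology \<Rightarrow> ('a \<Rightarrow> 'a \<Rightarrow> bool) \<Rightarrow> 'a set \<Rightarrow> 'a set" where
  "down_closure X le Y = {x \<in> topspace X. \<exists>y\<in>Y. le x y}"

definition is_upset :: "'a topology \<Rightarrow> ('a \<Rightarrow> 'a \<Rightarrow> bool) \<Rightarrow> 'a set \<Rightarrow> bool" where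
  "is_upset X le U \<longleftrightarrow> U \<subseteq> topspace X \<and> up_closure X le U \<subseteq> U"

definition is_downset :: "'a topology \<Rightarrow> ('a \<Rightarrow> 'a \<Rightarrow> bool) \<Rightarrow> 'a set \<Rightarrow> bool" where
  "is_downset X le U \<longleftrightarrow> U \<subseteq> topspace X \<and> down_closure X le U \<subseteq> U"

definition order_convex :: "'a topology \<Rightarrow> ('a \<Rightarrow> 'a \<Rightarrow> bool) \<Rightarrow> 'a set \<Rightarrow> bool" where
  "order_convex X le Y \<longleftrightarrow>
     (\<forall>y1\<in>Y. \<forall>y2\<in>Y. \<forall>x\<in>topspace X. le y1 x \<and> le x y2 \<longrightarrow> x \<in> Y)"

text \<open>Carrier of the convex Vietoris hyperspace: closed convex subsets (including the empty set).\<close>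

definition Vc_carrier :: "'a topology \<Rightarrow> ('a \<Rightarrow> 'a \<Rightarrow> bool) \<Rightarrow> 'a set set" where
  "Vc_carrier X le = {K. closedin X K \<and> order_convex X le K}"

definition Vc_diamond :: "'a topology \<Rightarrow> ('a \<Rightarrow> 'a \<Rightarrow> bool) \<Rightarrow> 'a set \<Rightarrow> 'a set set" where
  "Vc_diamond X le U = {K \<in> Vc_carrier X le. K \<inter> U \<noteq> {}}"

definition Vc_box :: "'a topology \<Rightarrow> ('a \<Rightarrow> 'a \<Rightarrow> bool) \<Rightarrow> 'a set \<Rightarrow> 'a set set" where
  "Vc_box X le U = {K \<in> Vc_carrier X le. K \<subseteq> U}"

definition open_up_or_down :: "'a topology \<Rightarrow> ('a \<Rightarrow> 'a \<Rightarrow> bool) \<Rightarrow> 'a set \<Rightarrow> bool" where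
  "open_up_or_down X le U \<longleftrightarrow> openin X U \<and> (is_upset X le U \<or> is_downset X le U)"

text \<open>Note Box (topspace X) is the whole carrier, so the topspace
  of the generated topology is exactly the carrier.\<close>

definition Vc_topology :: "'a topology \<Rightarrow> ('a \<Rightarrow> 'a \<Rightarrow> bool) \<Rightarrow> 'a set topology" where
  "Vc_topology X le = topology_generated_by
     ({Vc_diamond X le U | U. open_up_or_down X le U} \<union> {Vc_box X le U | U. open_up_or_down X le U})"

definition EM_le :: "'a topology \<Rightarrow> ('a \<Rightarrow> 'a \<Rightarrow> bool) \<Rightarrow> 'a set \<Rightarrow> 'a set \<Rightarrow> bool" where
  "EM_le X le K L \<longleftrightarrow> up_closure X le L \<subseteq> up_closure X le K \<and> down_closure X le K \<subseteq> down_closure X le L"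

end

theory Submission
  imports Defs
begin

lemma gen_subbase_eq:
  "topology_generated_by B = topology (arbitrary union_of (finite intersection_of (\<lambda>x. x \<in> B) relative_to \<Union>B))"
proof (subst topology_eq, intro allI iffI)
  fix S assume "openin (topology_generated_by B) S"
  hence g: "generate_topology_on B S" by (rule openin_topology_generated_by)
  show "openin (topology (arbitrary union_of (finite intersection_of (\<lambda>x. x \<in> B) relative_to \<Union>B))) S"
  proof (rule generate_topology_on_coarsest[OF _ _ g])
    show "istopology (openin (topology (arbitrary union_of (finite intersection_of (\<lambda>x. x \<in> B) relative_to \<Union>B))))"
      by (rule istopology_openin)
    fix s assume "s \<in> B"
    then show "openin (topology (arbitrary union_of (finite intersection_of (\<lambda>x. x \<in> B) relative_to \<Union>B))) s"
      unfolding openin_subbase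
      by (metis Sup_upper arbitrary_union_of_inc finite_intersection_of_inc relative_to_subset_inc)
  qed
next
  fix S assume A: "openin (topology (arbitrary union_of (finite intersection_of (\<lambda>x. x \<in> B) relative_to \<Union>B))) S"
  show "openin (topology_generated_by B) S"
  proof (rule minimal_topology_subbase[OF _ _ A])
    show "openin (topology_generated_by B) (\<Union> B)"
      using openin_topspace[of "topology_generated_by B"] by simp
  qed (auto intro: topology_generated_by_Basis)
qed

lemma cos_props:
  assumes "compact_ordered_space X le"
  shows "compact_space X" "Hausdorff_space X"
    "\<And>x. x \<in> topspace X \<Longrightarrow> le x x"
    "\<And>x y. x \<in> topspace X \<Longrightarrow> y \<in> topspace X \<Longrightarrow> le x y \<Longrightarrow> le y x \<Longrightarrow> x = y"
    "\<And>x y z. x \<in> topspace X \<Longrightarrow> y \<in> topspace X \<Longrightarrow> z \<in> topspace X \<Longrightarrow> le x y \<Longrightarrow> le y z \<Longrightarrow> le x z"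
    "closedin (prod_topology X X) (order_graph X le)"
  using assms unfolding compact_ordered_space_def partial_order_on_set_def by blast+

lemma up_closure_closed:
  assumes co: "compact_ordered_space X le" and C: "closedin X C"
  shows "closedin X (up_closure X le C)"
proof -
  have eq: "up_closure X le C = snd ` (order_graph X le \<inter> (C \<times> topspace X))"
    using closedin_subset[OF C]
    by (force simp: up_closure_def order_graph_def image_iff)
  have "closedin (prod_topology X X) (order_graph X le \<inter> (C \<times> topspace X))"
    using cos_props(6)[OF co] C by (intro closedin_Int) (auto simp: closedin_prod_Times_iff)
  then have "compactin (prod_topology X X) (order_graph X le \<inter> (C \<times> topspace X))"
    using cos_props(1)[OF co] closedin_compact_space compact_space_prod_topology by blast
  then have "compactin X (snd ` (order_graph X le \<inter> (C \<times> topspace X)))"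
    using image_compactin continuous_map_snd by blast
  then show ?thesis using eq compactin_imp_closedin cos_props(2)[OF co] by metis
qed

lemma down_closure_closed:
  assumes co: "compact_ordered_space X le" and C: "closedin X C"
  shows "closedin X (down_closure X le C)"
proof -
  have eq: "down_closure X le C = fst ` (order_graph X le \<inter> (topspace X \<times> C))"
    using closedin_subset[OF C]
    by (force simp: down_closure_def order_graph_def image_iff)
  have "closedin (prod_topology X X) (order_graph X le \<inter> (topspace X \<times> C))"
    using cos_props(6)[OF co] C by (intro closedin_Int) (auto simp: closedin_prod_Times_iff)
  then have "compactin (prod_topology X X) (order_graph X le \<inter> (topspace X \<times> C))"
    using cos_props(1)[OF co] closedin_compact_space compact_space_prod_topology by blast
  then have "compactin X (fst ` (order_graph X le \<inter> (topspace X \<times> C)))"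
    using image_compactin continuous_map_fst by blast
  then show ?thesis using eq compactin_imp_closedin cos_props(2)[OF co] by metis
qed

lemma separation:
  assumes co: "compact_ordered_space X le" and C: "closedin X C" and D: "closedin X D"
    and nle: "\<And>c d. c \<in> C \<Longrightarrow> d \<in> D \<Longrightarrow> \<not> le c d"
  shows "\<exists>U V. openin X U \<and> openin X V \<and> is_upset X le U \<and> is_downset X le V \<and>
               C \<subseteq> U \<and> D \<subseteq> V \<and> U \<inter> V = {}"
proof -
  note P = cos_props[OF co]
  have Cs: "C \<subseteq> topspace X" and Ds: "D \<subseteq> topspace X" using C D closedin_subset by auto
  define F where "F = up_closure X le C"
  define G where "G = down_closure X le D"
  have Fc: "closedin X F" using up_closure_closed[OF co C] F_def by simp
  have Gc: "closedin X G" using down_closure_closed[OF co D] G_def by simp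
  have disj: "disjnt F G"
  proof -
    { fix z assume "z \<in> F" "z \<in> G"
      then obtain c d where "c \<in> C" "d \<in> D" "le c z" "le z d" "z \<in> topspace X"
        unfolding F_def G_def up_closure_def down_closure_def by blast
      then have "le c d" using P(5) Cs Ds by blast
      with nle \<open>c \<in> C\<close> \<open>d \<in> D\<close> have False by blast }
    then show ?thesis by (auto simp: disjnt_def)
  qed
  have nsp: "normal_space X"
    using P(1,2) compact_Hausdorff_or_regular_imp_normal_space by blast
  obtain W1 W2 where W: "openin X W1" "openin X W2" "F \<subseteq> W1" "G \<subseteq> W2" "disjnt W1 W2"
    using nsp[unfolded normal_space_def, rule_format, OF conjI[OF Fc conjI[OF Gc disj]]] by blast
  define U where "U = topspace X - down_closure X le (topspace X - W1)"
  define V where "V = topspace X - up_closure X le (topspace X - W2)"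
  have "openin X U" unfolding U_def
    by (intro openin_diff openin_topspace down_closure_closed[OF co]) (simp add: W(1) closedin_diff)
  moreover have "openin X V" unfolding V_def
    by (intro openin_diff openin_topspace up_closure_closed[OF co]) (simp add: W(2) closedin_diff)
  moreover have "is_upset X le U"
    unfolding is_upset_def
  proof
    show "U \<subseteq> topspace X" unfolding U_def by blast
    show "up_closure X le U \<subseteq> U"
    proof
      fix z assume "z \<in> up_closure X le U"
      then obtain x where x: "x \<in> U" "le x z" "z \<in> topspace X" unfolding up_closure_def by blast
      show "z \<in> U"
      proof (rule ccontr)
        assume "z \<notin> U"
        then obtain w where "w \<in> topspace X" "w \<notin> W1" "le z w"
          using x(3) unfolding U_def down_closure_def by blast
        moreover have "x \<in> topspace X" using x(1) unfolding U_def by blast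
        ultimately have "le x w" using P(5) x by blast
        then show False using x(1) \<open>w \<in> topspace X\<close> \<open>w \<notin> W1\<close> \<open>x \<in> topspace X\<close>
          unfolding U_def down_closure_def by blast
      qed
    qed
  qed
  moreover have "is_downset X le V"
    unfolding is_downset_def
  proof
    show "V \<subseteq> topspace X" unfolding V_def by blast
    show "down_closure X le V \<subseteq> V"
    proof
      fix z assume "z \<in> down_closure X le V"
      then obtain x where x: "x \<in> V" "le z x" "z \<in> topspace X" unfolding down_closure_def by blast
      show "z \<in> V"
      proof (rule ccontr)
        assume "z \<notin> V"
        then obtain w where "w \<in> topspace X" "w \<notin> W2" "le w z"
          using x(3) unfolding V_def up_closure_def by blast
        moreover have "x \<in> topspace X" using x(1) unfolding V_def by blast
        ultimately have "le w x" using P(5) x by blast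
        then show False using x(1) \<open>w \<in> topspace X\<close> \<open>w \<notin> W2\<close> \<open>x \<in> topspace X\<close>
          unfolding V_def up_closure_def by blast
      qed
    qed
  qed
  moreover have UW: "U \<subseteq> W1" unfolding U_def down_closure_def using P(3) by blast
  moreover have VW: "V \<subseteq> W2" unfolding V_def up_closure_def using P(3) by blast
  moreover have "C \<subseteq> U"
  proof
    fix c assume c: "c \<in> C"
    { fix w assume "w \<in> topspace X" "w \<notin> W1" "le c w"
      then have "w \<in> F" using c unfolding F_def up_closure_def by blast
      with W(3) \<open>w \<notin> W1\<close> have False by blast }
    then show "c \<in> U" using c Cs unfolding U_def down_closure_def by blast
  qed
  moreover have "D \<subseteq> V"
  proof
    fix d assume d: "d \<in> D"
    { fix w assume "w \<in> topspace X" "w \<notin> W2" "le w d"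
      then have "w \<in> G" using d unfolding G_def down_closure_def by blast
      with W(4) \<open>w \<notin> W2\<close> have False by blast }
    then show "d \<in> V" using d Ds unfolding V_def up_closure_def by blast
  qed
  moreover have "U \<inter> V = {}" using UW VW W(5) by (auto simp: disjnt_def)
  ultimately show ?thesis by blast
qed

definition Vc_sub where
  "Vc_sub X le = {Vc_diamond X le U | U. open_up_or_down X le U} \<union> {Vc_box X le U | U. open_up_or_down X le U}"

lemma Vc_top_eq: "Vc_topology X le = topology_generated_by (Vc_sub X le)"
  by (simp add: Vc_topology_def Vc_sub_def)

lemma Vc_sub_topspace: "\<Union>(Vc_sub X le) = Vc_carrier X le"
proof
  show "\<Union>(Vc_sub X le) \<subseteq> Vc_carrier X le"
    unfolding Vc_sub_def Vc_diamond_def Vc_box_def by blast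
  have "open_up_or_down X le (topspace X)"
    unfolding open_up_or_down_def is_upset_def up_closure_def by auto
  moreover have "Vc_box X le (topspace X) = Vc_carrier X le"
    unfolding Vc_box_def Vc_carrier_def using closedin_subset by blast
  ultimately show "Vc_carrier X le \<subseteq> \<Union>(Vc_sub X le)"
    unfolding Vc_sub_def by blast
qed

lemma Vc_topspace: "topspace (Vc_topology X le) = Vc_carrier X le"
  by (simp add: Vc_top_eq Vc_sub_topspace)

lemma open_diamond: "open_up_or_down X le U \<Longrightarrow> openin (Vc_topology X le) (Vc_diamond X le U)"
  unfolding Vc_top_eq by (rule topology_generated_by_Basis) (auto simp: Vc_sub_def)

lemma open_box: "open_up_or_down X le U \<Longrightarrow> openin (Vc_topology X le) (Vc_box X le U)"
  unfolding Vc_top_eq by (rule topology_generated_by_Basis) (auto simp: Vc_sub_def)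

lemma carrier_eq:
  assumes co: "compact_ordered_space X le" and K: "K \<in> Vc_carrier X le"
  shows "K = up_closure X le K \<inter> down_closure X le K"
proof -
  have Ks: "K \<subseteq> topspace X" using K closedin_subset unfolding Vc_carrier_def by blast
  have cv: "order_convex X le K" using K unfolding Vc_carrier_def by blast
  show ?thesis
  proof
    show "K \<subseteq> up_closure X le K \<inter> down_closure X le K"
      using Ks cos_props(3)[OF co] unfolding up_closure_def down_closure_def by blast
    show "up_closure X le K \<inter> down_closure X le K \<subseteq> K"
      using cv unfolding up_closure_def down_closure_def order_convex_def by blast
  qed
qed

lemma EM_partial:
  assumes co: "compact_ordered_space X le"
  shows "partial_order_on_set (Vc_carrier X le) (EM_le X le)"
  unfolding partial_order_on_set_def
proof (intro conjI ballI impI)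
  fix K L assume "K \<in> Vc_carrier X le" "L \<in> Vc_carrier X le" "EM_le X le K L \<and> EM_le X le L K"
  then show "K = L" using carrier_eq[OF co] unfolding EM_le_def by (metis subset_antisym)
qed (auto simp: EM_le_def)

lemma key_sep:
  assumes co: "compact_ordered_space X le" and K: "K \<in> Vc_carrier X le" and L: "L \<in> Vc_carrier X le"
    and nle: "\<not> EM_le X le K L"
  shows "\<exists>N1 N2. openin (Vc_topology X le) N1 \<and> openin (Vc_topology X le) N2 \<and> K \<in> N1 \<and> L \<in> N2 \<and>
            (\<forall>K'\<in>N1. \<forall>L'\<in>N2. \<not> EM_le X le K' L')"
proof -
  note P = cos_props[OF co]
  have Kc: "closedin X K" and Lc: "closedin X L" using K L unfolding Vc_carrier_def by auto
  have Ks: "K \<subseteq> topspace X" and Ls: "L \<subseteq> topspace X" using Kc Lc closedin_subset by auto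
  consider (A) "\<not> down_closure X le K \<subseteq> down_closure X le L"
    | (B) "\<not> up_closure X le L \<subseteq> up_closure X le K"
    using nle unfolding EM_le_def by blast
  then show ?thesis
  proof cases
    case A
    then obtain x k where xk: "x \<in> topspace X" "k \<in> K" "le x k" "x \<notin> down_closure X le L"
      unfolding down_closure_def by blast
    have kt: "k \<in> topspace X" using xk Ks by blast
    have nk: "\<not> le k l" if "l \<in> L" for l
    proof
      assume "le k l"
      then have "le x l" using P(5) xk kt Ls that by blast
      then show False using xk that unfolding down_closure_def by blast
    qed
    obtain U V where UV: "openin X U" "openin X V" "is_upset X le U" "is_downset X le V"
      "{k} \<subseteq> U" "L \<subseteq> V" "U \<inter> V = {}"
      using separation[OF co closedin_Hausdorff_singleton[OF P(2) kt] Lc] nk by blast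
    have o1: "open_up_or_down X le U" "open_up_or_down X le V"
      using UV unfolding open_up_or_down_def by auto
    show ?thesis
    proof (intro exI conjI ballI)
      show "openin (Vc_topology X le) (Vc_diamond X le U)" by (rule open_diamond[OF o1(1)])
      show "openin (Vc_topology X le) (Vc_box X le V)" by (rule open_box[OF o1(2)])
      show "K \<in> Vc_diamond X le U" using K xk UV unfolding Vc_diamond_def by blast
      show "L \<in> Vc_box X le V" using L UV unfolding Vc_box_def by blast
      fix K' L' assume K': "K' \<in> Vc_diamond X le U" and L': "L' \<in> Vc_box X le V"
      then obtain k' where k': "k' \<in> K'" "k' \<in> U" unfolding Vc_diamond_def by blast
      have k't: "k' \<in> topspace X" using k' UV(3) unfolding is_upset_def by blast
      show "\<not> EM_le X le K' L'"
      proof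
        assume "EM_le X le K' L'"
        moreover have "k' \<in> down_closure X le K'" using k' k't P(3) unfolding down_closure_def by blast
        ultimately have "k' \<in> down_closure X le L'" unfolding EM_le_def by blast
        moreover have "down_closure X le L' \<subseteq> V"
          using L' UV(4) unfolding Vc_box_def is_downset_def down_closure_def by blast
        ultimately show False using k' UV(7) by blast
      qed
    qed
  next
    case B
    then obtain y l where yl: "y \<in> topspace X" "l \<in> L" "le l y" "y \<notin> up_closure X le K"
      unfolding up_closure_def by blast
    have lt: "l \<in> topspace X" using yl Ls by blast
    have nk: "\<not> le k l" if "k \<in> K" for k
    proof
      assume "le k l"
      then have "le k y" using P(5) yl lt Ks that by blast
      then show False using yl that unfolding up_closure_def by blast
    qed
    obtain U V where UV: "openin X U" "openin X V" "is_upset X le U" "is_downset X le V"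
      "K \<subseteq> U" "{l} \<subseteq> V" "U \<inter> V = {}"
      using separation[OF co Kc closedin_Hausdorff_singleton[OF P(2) lt]] nk by blast
    have o1: "open_up_or_down X le U" "open_up_or_down X le V"
      using UV unfolding open_up_or_down_def by auto
    show ?thesis
    proof (intro exI conjI ballI)
      show "openin (Vc_topology X le) (Vc_box X le U)" by (rule open_box[OF o1(1)])
      show "openin (Vc_topology X le) (Vc_diamond X le V)" by (rule open_diamond[OF o1(2)])
      show "K \<in> Vc_box X le U" using K UV unfolding Vc_box_def by blast
      show "L \<in> Vc_diamond X le V" using L yl UV unfolding Vc_diamond_def by blast
      fix K' L' assume K': "K' \<in> Vc_box X le U" and L': "L' \<in> Vc_diamond X le V"
      then obtain l' where l': "l' \<in> L'" "l' \<in> V" unfolding Vc_diamond_def by blast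
      have l't: "l' \<in> topspace X" using l' UV(4) unfolding is_downset_def by blast
      show "\<not> EM_le X le K' L'"
      proof
        assume "EM_le X le K' L'"
        moreover have "l' \<in> up_closure X le L'" using l' l't P(3) unfolding up_closure_def by blast
        ultimately have "l' \<in> up_closure X le K'" unfolding EM_le_def by blast
        moreover have "up_closure X le K' \<subseteq> U"
          using K' UV(3) unfolding Vc_box_def is_upset_def up_closure_def by blast
        ultimately show False using l' UV(7) by blast
      qed
    qed
  qed
qed

lemma Vc_closed_graph:
  assumes co: "compact_ordered_space X le"
  shows "closedin (prod_topology (Vc_topology X le) (Vc_topology X le)) (order_graph (Vc_topology X le) (EM_le X le))"
  unfolding closedin_def
proof
  show "order_graph (Vc_topology X le) (EM_le X le) \<subseteq> topspace (prod_topology (Vc_topology X le) (Vc_topology X le))"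
    unfolding order_graph_def by auto
  show "openin (prod_topology (Vc_topology X le) (Vc_topology X le))
     (topspace (prod_topology (Vc_topology X le) (Vc_topology X le)) - order_graph (Vc_topology X le) (EM_le X le))"
  proof (subst openin_subopen, intro ballI)
    fix p assume p: "p \<in> topspace (prod_topology (Vc_topology X le) (Vc_topology X le)) - order_graph (Vc_topology X le) (EM_le X le)"
    obtain K L where pKL: "p = (K, L)" by (cases p)
    have K: "K \<in> Vc_carrier X le" and L: "L \<in> Vc_carrier X le" and n: "\<not> EM_le X le K L"
      using p pKL by (auto simp: Vc_topspace order_graph_def)
    obtain N1 N2 where N: "openin (Vc_topology X le) N1" "openin (Vc_topology X le) N2" "K \<in> N1" "L \<in> N2"
      "\<forall>K'\<in>N1. \<forall>L'\<in>N2. \<not> EM_le X le K' L'"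
      using key_sep[OF co K L n] by blast
    show "\<exists>T. openin (prod_topology (Vc_topology X le) (Vc_topology X le)) T \<and> p \<in> T \<and>
          T \<subseteq> topspace (prod_topology (Vc_topology X le) (Vc_topology X le)) - order_graph (Vc_topology X le) (EM_le X le)"
    proof (intro exI conjI)
      show "openin (prod_topology (Vc_topology X le) (Vc_topology X le)) (N1 \<times> N2)"
        using N by (simp add: openin_prod_Times_iff)
      show "p \<in> N1 \<times> N2" using N pKL by simp
      show "N1 \<times> N2 \<subseteq> topspace (prod_topology (Vc_topology X le) (Vc_topology X le)) - order_graph (Vc_topology X le) (EM_le X le)"
        using N openin_subset[OF N(1)] openin_subset[OF N(2)] by (auto simp: order_graph_def)
    qed
  qed
qed

lemma Vc_Hausdorff:
  assumes co: "compact_ordered_space X le"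
  shows "Hausdorff_space (Vc_topology X le)"
  unfolding Hausdorff_space_def
proof (intro allI impI)
  fix K L assume a: "K \<in> topspace (Vc_topology X le) \<and> L \<in> topspace (Vc_topology X le) \<and> K \<noteq> L"
  then have K: "K \<in> Vc_carrier X le" and L: "L \<in> Vc_carrier X le" by (auto simp: Vc_topspace)
  have refl: "EM_le X le M M" for M by (simp add: EM_le_def)
  have "\<not> EM_le X le K L \<or> \<not> EM_le X le L K"
    using EM_partial[OF co] K L a unfolding partial_order_on_set_def by blast
  then show "\<exists>U V. openin (Vc_topology X le) U \<and> openin (Vc_topology X le) V \<and> K \<in> U \<and> L \<in> V \<and> disjnt U V"
  proof
    assume "\<not> EM_le X le K L"
    then obtain N1 N2 where N: "openin (Vc_topology X le) N1" "openin (Vc_topology X le) N2" "K \<in> N1" "L \<in> N2"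
      "\<forall>K'\<in>N1. \<forall>L'\<in>N2. \<not> EM_le X le K' L'"
      using key_sep[OF co K L] by blast
    then show ?thesis using refl unfolding disjnt_def by blast
  next
    assume "\<not> EM_le X le L K"
    then obtain N1 N2 where N: "openin (Vc_topology X le) N1" "openin (Vc_topology X le) N2" "L \<in> N1" "K \<in> N2"
      "\<forall>K'\<in>N1. \<forall>L'\<in>N2. \<not> EM_le X le K' L'"
      using key_sep[OF co L K] by blast
    then show ?thesis using refl unfolding disjnt_def by blast
  qed
qed

lemma Vc_compact:
  assumes co: "compact_ordered_space X le"
  shows "compact_space (Vc_topology X le)"
proof (rule Alexander_subbase[where \<B> = "Vc_sub X le"])
  show "topology (arbitrary union_of (finite intersection_of (\<lambda>x. x \<in> Vc_sub X le) relative_to \<Union> (Vc_sub X le))) =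
    Vc_topology X le" by (simp add: Vc_top_eq gen_subbase_eq)
next
  note P = cos_props[OF co]
  fix C assume C: "C \<subseteq> Vc_sub X le" and UC: "\<Union>C = topspace (Vc_topology X le)"
  define Iu where "Iu = {U. open_up_or_down X le U \<and> Vc_diamond X le U \<in> C}"
  define A where "A = \<Union>{U \<in> Iu. is_upset X le U}"
  define B where "B = \<Union>{U \<in> Iu. is_downset X le U}"
  define K0 where "K0 = topspace X - A - B"
  have Ao: "openin X A" unfolding A_def Iu_def open_up_or_down_def by auto
  have Bo: "openin X B" unfolding B_def Iu_def open_up_or_down_def by auto
  have K0c: "closedin X K0" unfolding K0_def using Ao Bo by (simp add: closedin_diff)
  have K0v: "order_convex X le K0"
    unfolding order_convex_def
  proof (intro ballI impI)
    fix y1 y2 x assume y: "y1 \<in> K0" "y2 \<in> K0" "x \<in> topspace X" "le y1 x \<and> le x y2"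
    have y2t: "y2 \<in> topspace X" and y1t: "y1 \<in> topspace X" using y unfolding K0_def by auto
    have "x \<notin> A"
    proof
      assume "x \<in> A"
      then obtain U where U: "U \<in> Iu" "is_upset X le U" "x \<in> U" unfolding A_def by blast
      then have "y2 \<in> up_closure X le U" using y y2t unfolding up_closure_def by blast
      then have "y2 \<in> A" using U unfolding is_upset_def A_def by blast
      then show False using y unfolding K0_def by blast
    qed
    moreover have "x \<notin> B"
    proof
      assume "x \<in> B"
      then obtain U where U: "U \<in> Iu" "is_downset X le U" "x \<in> U" unfolding B_def by blast
      then have "y1 \<in> down_closure X le U" using y y1t unfolding down_closure_def by blast
      then have "y1 \<in> B" using U unfolding is_downset_def B_def by blast
      then show False using y unfolding K0_def by blast
    qed
    ultimately show "x \<in> K0" using y unfolding K0_def by blast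
  qed
  have K0C: "K0 \<in> Vc_carrier X le" using K0c K0v unfolding Vc_carrier_def by blast
  then obtain c where c: "c \<in> C" "K0 \<in> c" using UC by (auto simp: Vc_topspace)
  have "\<exists>V. open_up_or_down X le V \<and> c = Vc_box X le V"
  proof -
    { fix U assume U: "open_up_or_down X le U" "c = Vc_diamond X le U"
      then have "U \<in> Iu" using c unfolding Iu_def by blast
      moreover obtain z where "z \<in> K0" "z \<in> U" using U c unfolding Vc_diamond_def by blast
      ultimately have False using U(1) unfolding open_up_or_down_def A_def B_def K0_def by blast }
    then show ?thesis using c C unfolding Vc_sub_def by blast
  qed
  then obtain V where V: "open_up_or_down X le V" "c = Vc_box X le V" by blast
  have K0V: "K0 \<subseteq> V" using c V unfolding Vc_box_def by blast
  have "compactin X (topspace X - V)"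
    using P(1) V(1) closedin_compact_space unfolding open_up_or_down_def by blast
  moreover have "topspace X - V \<subseteq> \<Union>Iu"
    using K0V unfolding K0_def A_def B_def by blast
  moreover have "\<forall>U\<in>Iu. openin X U" unfolding Iu_def open_up_or_down_def by blast
  ultimately obtain F where F: "finite F" "F \<subseteq> Iu" "topspace X - V \<subseteq> \<Union>F"
    unfolding compactin_def by meson
  show "\<exists>C'. finite C' \<and> C' \<subseteq> C \<and> \<Union> C' = topspace (Vc_topology X le)"
  proof (intro exI conjI)
    let ?C' = "insert c (Vc_diamond X le ` F)"
    show "finite ?C'" using F by simp
    show "?C' \<subseteq> C" using c F unfolding Iu_def by blast
    show "\<Union>?C' = topspace (Vc_topology X le)"
    proof
      show "\<Union>?C' \<subseteq> topspace (Vc_topology X le)" using \<open>?C' \<subseteq> C\<close> UC by blast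
      show "topspace (Vc_topology X le) \<subseteq> \<Union>?C'"
      proof
        fix L assume "L \<in> topspace (Vc_topology X le)"
        then have L: "L \<in> Vc_carrier X le" by (simp add: Vc_topspace)
        have Ls: "L \<subseteq> topspace X" using L closedin_subset unfolding Vc_carrier_def by blast
        show "L \<in> \<Union>?C'"
        proof (cases "L \<subseteq> V")
          case True then show ?thesis using L V unfolding Vc_box_def by blast
        next
          case False
          then obtain x where "x \<in> L" "x \<notin> V" by blast
          then obtain U where "U \<in> F" "x \<in> U" using F Ls by blast
          then have "L \<in> Vc_diamond X le U" using L \<open>x \<in> L\<close> unfolding Vc_diamond_def by blast
          then show ?thesis using \<open>U \<in> F\<close> by blast
        qed
      qed
    qed
  qed
qed

theorem theorem3p6:
  fixes X :: "'a topology" and le :: "'a \<Rightarrow> 'a \<Rightarrow> bool"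
  assumes "compact_ordered_space X le"
  shows "topspace (Vc_topology X le) = Vc_carrier X le \<and>
         compact_ordered_space (Vc_topology X le) (EM_le X le)"
  using Vc_topspace[of X le] Vc_compact[OF assms] Vc_Hausdorff[OF assms] EM_partial[OF assms]
    Vc_closed_graph[OF assms]
  unfolding compact_ordered_space_def by simp

end
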